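(* Let $p$ be a prime, $d,t$ positive integers, $W=\mathbb{F}_p^d$, $U=\mathbb{F}_p^t$, and $V=\mathbb{F}_p^{d+t}=W\oplus U$. Let $g$ be a complete mapping of $U$ of cycle type $x_1^{k_1}\cdots x_{p^t}^{k_{p^t}}$, and for $\ell=1,\ldots,p^t$ enumerate its cycles of length $\ell$ as $\zeta_{\ell,i}=(u_{\ell,i,0},u_{\ell,i,1},\ldots,u_{\ell,i,\ell-1})$, $i=1,\ldots,k_\ell$ (so $g(u_{\ell,i,j})=u_{\ell,i,(j+1)\bmod \ell}$). For each such $\ell,i$ and $j=0,\ldots,\ell-1$ choose $M_{\ell,i,j}\in\operatorname{CGL}_d(p)$, and choose $w_{\ell,i}\in W$; put $\gamma_{\ell,i}=\operatorname{CT}(\lambda(M_{\ell,i,0}M_{\ell,i,1}\cdots M_{\ell,i,\ell-1},w_{\ell,i}))$. For $u=u_{\ell,i,j}$ define $\alpha_u:W\to W$, $w\mapsto wM_{\ell,i,j}$; $\omega_u=0$ if $j<\ell-1$ and $\omega_u=w_{\ell,i}$ if $j=\ell-1$; and $\nu_u=u_{\ell,i,(j+1)\bmod\ell}-u_{\ell,i,j}$. Then the $W$-coset-wise $\mathbb{F}_p$-affine function \[ f:V\to V,\quad w+u\mapsto \alpha_u(w)+u+\omega_u+\nu_u\quad(w\in W,u\in U) \] is a complete mapping of $V$ with cycle type $\prod_{\ell=1}^{p^t}\prod_{i=1}^{k_\ell}\operatorname{BU}_\ell(\gamma_{\ell,i})$.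
   Context: A complete mapping of an additive group $G$ is a permutation $h$ of $G$ such that $x\mapsto h(x)+x$ is also a permutation. Vectors are row vectors; for a $(d\times d)$-matrix $M$ over $\mathbb{F}_p$ and $v\in\mathbb{F}_p^d$, $\lambda(M,v)$ is the map $x\mapsto xM+v$ on $\mathbb{F}_p^d$. $\operatorname{CGL}_d(p)$ is the set of invertible $(d\times d)$-matrices over $\mathbb{F}_p$ not having $-1$ as an eigenvalue. The cycle type $\operatorname{CT}(\sigma)$ of a permutation $\sigma$ of a finite set $\Omega$ is the monomial $x_1^{k_1}\cdots x_{|\Omega|}^{k_{|\Omega|}}\in\mathbb{Q}[x_n:n\ge1]$ with $k_j$ the number of $j$-cycles. $\operatorname{BU}_\ell$ is the $\mathbb{Q}$-algebra endomorphism of $\mathbb{Q}[x_n:n\ge1]$ with $x_n\mapsto x_{\ell n}$. *)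

theory Defs
  imports "HOL-Analysis.Analysis" "HOL-Library.Multiset"
begin

definition complete_mapping :: "('g::ab_group_add \<Rightarrow> 'g) \<Rightarrow> bool" where
  "complete_mapping h \<longleftrightarrow> bij h \<and> bij (\<lambda>x. h x + x)"

text \<open>The affine map lambda(M,v): x maps to xM + v (row vectors).\<close>
definition aff_map :: "'a::comm_ring_1^'d^'d \<Rightarrow> 'a^'d \<Rightarrow> 'a^'d \<Rightarrow> 'a^'d" where
  "aff_map M v = (\<lambda>x. x v* M + v)"

definition CGL :: "('a::field^'d^'d) set" where
  "CGL = {M. invertible M \<and> \<not> (\<exists>v::'a^'d. v \<noteq> 0 \<and> v v* M = - v)}"

definition cyc :: "('b \<Rightarrow> 'b) \<Rightarrow> 'b \<Rightarrow> 'b set" where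
  "cyc \<sigma> x = range (\<lambda>n. (\<sigma> ^^ n) x)"

text \<open>Cycle type of a permutation of a finite type, encoded as the multiset of
  its cycle lengths: the monomial x_1^k_1 ... x_n^k_n corresponds to the multiset
  in which j has multiplicity k_j; products of monomials are multiset sums.\<close>
definition cycle_type :: "('b::finite \<Rightarrow> 'b) \<Rightarrow> nat multiset" where
  "cycle_type \<sigma> = image_mset card (mset_set {cyc \<sigma> x | x. True})"

definition BU :: "nat \<Rightarrow> nat multiset \<Rightarrow> nat multiset" where
  "BU l m = image_mset (\<lambda>n. l * n) m"

fun mat_chain :: "('u \<Rightarrow> 'u) \<Rightarrow> ('u \<Rightarrow> 'a::semiring_1^'d^'d) \<Rightarrow> 'u \<Rightarrow> nat \<Rightarrow> 'a^'d^'d" where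
  "mat_chain g M s 0 = mat 1"
| "mat_chain g M s (Suc n) = M s ** mat_chain g M (g s) n"

end

theory Submission imports Defs begin

definition per :: "('b \<Rightarrow> 'b) \<Rightarrow> 'b \<Rightarrow> nat" where
  "per \<sigma> x = (LEAST n. 0 < n \<and> (\<sigma> ^^ n) x = x)"

lemma per_ex:
  fixes \<sigma> :: "'b::finite \<Rightarrow> 'b"
  assumes "inj \<sigma>"
  shows "\<exists>n>0. (\<sigma> ^^ n) x = x"
proof -
  have "\<not> inj (\<lambda>n::nat. (\<sigma> ^^ n) x)"
  proof
    assume "inj (\<lambda>n::nat. (\<sigma> ^^ n) x)"
    then have "finite (UNIV :: nat set)"
      using finite_imageD[of "\<lambda>n::nat. (\<sigma> ^^ n) x" UNIV] by auto
    then show False by simp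
  qed
  then obtain i j :: nat where ij: "i \<noteq> j" "(\<sigma> ^^ i) x = (\<sigma> ^^ j) x"
    unfolding inj_def by blast
  have key: "(\<sigma> ^^ (b - a)) x = x" if "a < b" "(\<sigma> ^^ a) x = (\<sigma> ^^ b) x" for a b
  proof -
    have "(\<sigma> ^^ a) ((\<sigma> ^^ (b - a)) x) = (\<sigma> ^^ b) x"
      using that by (metis funpow_add le_add_diff_inverse less_imp_le o_apply)
    then have "(\<sigma> ^^ a) ((\<sigma> ^^ (b - a)) x) = (\<sigma> ^^ a) x" using that by simp
    moreover have "inj (\<sigma> ^^ a)" using assms by (rule inj_fn)
    ultimately show ?thesis by (meson injD)
  qed
  show ?thesis
  proof (cases "i < j")
    case True then show ?thesis using key[of i j] ij zero_less_diff by blast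
  next
    case False then have "j < i" using ij by simp
    then show ?thesis using key[of j i] ij zero_less_diff by metis
  qed
qed

context
  fixes \<sigma> :: "'b::finite \<Rightarrow> 'b"
  assumes inj: "inj \<sigma>"
begin

lemma per_pos: "0 < per \<sigma> x" and per_fix: "(\<sigma> ^^ per \<sigma> x) x = x"
proof -
  have "0 < per \<sigma> x \<and> (\<sigma> ^^ per \<sigma> x) x = x"
    unfolding per_def using per_ex[OF inj, of x] by (rule LeastI_ex)
  then show "0 < per \<sigma> x" "(\<sigma> ^^ per \<sigma> x) x = x" by auto
qed

lemma per_least: "0 < n \<Longrightarrow> (\<sigma> ^^ n) x = x \<Longrightarrow> per \<sigma> x \<le> n"
  unfolding per_def by (rule Least_le) simp

lemma funpow_mod_per: "(\<sigma> ^^ (n mod per \<sigma> x)) x = (\<sigma> ^^ n) x"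
  by (rule funpow_mod_eq) (rule per_fix)

lemma fix_iff_dvd: "(\<sigma> ^^ n) x = x \<longleftrightarrow> per \<sigma> x dvd n"
proof
  assume h: "(\<sigma> ^^ n) x = x"
  show "per \<sigma> x dvd n"
  proof (rule ccontr)
    assume "\<not> per \<sigma> x dvd n"
    then have "0 < n mod per \<sigma> x" by (simp add: mod_greater_zero_iff_not_dvd)
    moreover have "(\<sigma> ^^ (n mod per \<sigma> x)) x = x" using h funpow_mod_per by simp
    ultimately have "per \<sigma> x \<le> n mod per \<sigma> x" by (rule per_least)
    moreover have "n mod per \<sigma> x < per \<sigma> x" using per_pos by simp
    ultimately show False by simp
  qed
next
  assume "per \<sigma> x dvd n"
  then have "n mod per \<sigma> x = 0" by simp
  then show "(\<sigma> ^^ n) x = x" using funpow_mod_per[of n x] by simp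
qed

lemma per_unique: "(\<And>n. (\<sigma> ^^ n) x = x \<longleftrightarrow> k dvd n) \<Longrightarrow> per \<sigma> x = k"
  using fix_iff_dvd by (metis dvd_antisym dvd_refl)

lemma cyc_eq: "cyc \<sigma> x = (\<lambda>n. (\<sigma> ^^ n) x) ` {..<per \<sigma> x}"
proof
  show "cyc \<sigma> x \<subseteq> (\<lambda>n. (\<sigma> ^^ n) x) ` {..<per \<sigma> x}"
    unfolding cyc_def
  proof
    fix y assume "y \<in> range (\<lambda>n. (\<sigma> ^^ n) x)"
    then obtain n where "y = (\<sigma> ^^ n) x" by auto
    then have "y = (\<sigma> ^^ (n mod per \<sigma> x)) x" using funpow_mod_per by simp
    moreover have "n mod per \<sigma> x < per \<sigma> x" using per_pos by simp
    ultimately show "y \<in> (\<lambda>n. (\<sigma> ^^ n) x) ` {..<per \<sigma> x}" by auto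
  qed
qed (auto simp: cyc_def)

lemma inj_on_pow: "inj_on (\<lambda>n. (\<sigma> ^^ n) x) {..<per \<sigma> x}"
proof -
  have key: "False" if "a < b" "b < per \<sigma> x" "(\<sigma> ^^ a) x = (\<sigma> ^^ b) x" for a b
  proof -
    have "(\<sigma> ^^ a) ((\<sigma> ^^ (b - a)) x) = (\<sigma> ^^ b) x"
      using that by (metis funpow_add le_add_diff_inverse less_imp_le o_apply)
    then have "(\<sigma> ^^ a) ((\<sigma> ^^ (b - a)) x) = (\<sigma> ^^ a) x" using that by simp
    moreover have "inj (\<sigma> ^^ a)" using inj by (rule inj_fn)
    ultimately have "(\<sigma> ^^ (b - a)) x = x" by (meson injD)
    then have "per \<sigma> x \<le> b - a" using that by (intro per_least) auto
    then show False using that by simp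
  qed
  show ?thesis
  proof (rule inj_onI)
    fix a b assume "a \<in> {..<per \<sigma> x}" "b \<in> {..<per \<sigma> x}" "(\<sigma> ^^ a) x = (\<sigma> ^^ b) x"
    then show "a = b" using key[of a b] key[of b a] by (cases "a < b"; cases "b < a") auto
  qed
qed

lemma card_cyc: "card (cyc \<sigma> x) = per \<sigma> x"
  using card_image[OF inj_on_pow] cyc_eq by simp

lemma cyc_pow: "cyc \<sigma> ((\<sigma> ^^ j) x) = cyc \<sigma> x"
proof
  show "cyc \<sigma> ((\<sigma> ^^ j) x) \<subseteq> cyc \<sigma> x"
    unfolding cyc_def
  proof
    fix y assume "y \<in> range (\<lambda>n. (\<sigma> ^^ n) ((\<sigma> ^^ j) x))"
    then obtain n where "y = (\<sigma> ^^ n) ((\<sigma> ^^ j) x)" by auto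
    then have "y = (\<sigma> ^^ (n + j)) x" by (simp add: funpow_add)
    then show "y \<in> range (\<lambda>n. (\<sigma> ^^ n) x)" by blast
  qed
next
  show "cyc \<sigma> x \<subseteq> cyc \<sigma> ((\<sigma> ^^ j) x)"
    unfolding cyc_def
  proof
    fix y assume "y \<in> range (\<lambda>n. (\<sigma> ^^ n) x)"
    then obtain n where y: "y = (\<sigma> ^^ n) x" by auto
    define P where "P = per \<sigma> x"
    have P: "0 < P" unfolding P_def by (rule per_pos)
    have e: "n + j * (P - 1) + j = n + j * P" using P
      by (cases P) (auto simp: algebra_simps)
    have "(\<sigma> ^^ (n + j * (P - 1))) ((\<sigma> ^^ j) x) = (\<sigma> ^^ (n + j * (P - 1) + j)) x"
      by (simp add: funpow_add)
    also have "\<dots> = (\<sigma> ^^ (n + j * P)) x" by (simp only: e)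
    also have "\<dots> = (\<sigma> ^^ ((n + j * P) mod P)) x" unfolding P_def by (rule funpow_mod_per[symmetric])
    also have "\<dots> = (\<sigma> ^^ n) x" unfolding P_def by (simp add: funpow_mod_per)
    finally show "y \<in> range (\<lambda>n. (\<sigma> ^^ n) ((\<sigma> ^^ j) x))" using y by (metis rangeI)
  qed
qed

lemma cyc_mem: "y \<in> cyc \<sigma> x \<Longrightarrow> cyc \<sigma> y = cyc \<sigma> x"
proof -
  assume "y \<in> cyc \<sigma> x"
  then obtain k where "y = (\<sigma> ^^ k) x" unfolding cyc_def by auto
  then show ?thesis using cyc_pow by simp
qed

lemma self_cyc: "x \<in> cyc \<sigma> x"
  unfolding cyc_def by (metis funpow_0 rangeI)

lemma count_ct:
  assumes "0 < n"
  shows "n * count (cycle_type \<sigma>) n = card {x. card (cyc \<sigma> x) = n}"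
proof -
  define Orb where "Orb = {cyc \<sigma> x | x. True}"
  have finO: "finite Orb" by simp
  have "count (cycle_type \<sigma>) n = (\<Sum>y\<in>card -` {n} \<inter> Orb. 1)"
    unfolding cycle_type_def Orb_def[symmetric] count_image_mset using finO by simp
  also have "\<dots> = card {c\<in>Orb. card c = n}"
    by (simp add: vimage_def Int_def conj_commute)
  finally have c: "count (cycle_type \<sigma>) n = card {c\<in>Orb. card c = n}" .
  have U: "{x. card (cyc \<sigma> x) = n} = \<Union>{c\<in>Orb. card c = n}"
  proof
    show "{x. card (cyc \<sigma> x) = n} \<subseteq> \<Union>{c\<in>Orb. card c = n}"
      using self_cyc Orb_def by blast
    show "\<Union>{c\<in>Orb. card c = n} \<subseteq> {x. card (cyc \<sigma> x) = n}"
      using cyc_mem Orb_def by auto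
  qed
  have disj: "pairwise disjnt {c\<in>Orb. card c = n}"
    unfolding pairwise_def disjnt_def Orb_def
    by (auto dest: cyc_mem)
  have "card {x. card (cyc \<sigma> x) = n} = sum card {c\<in>Orb. card c = n}"
    unfolding U by (rule card_Union_disjoint[OF disj]) simp
  also have "\<dots> = n * card {c\<in>Orb. card c = n}" by simp
  finally show ?thesis using c by simp
qed

end

lemma count_ct0: "count (cycle_type (\<sigma>::'b::finite \<Rightarrow> 'b)) 0 = 0"
proof -
  have "card (cyc \<sigma> x) \<noteq> 0" for x
    unfolding cyc_def by (simp add: card_eq_0_iff)
  then show ?thesis unfolding cycle_type_def by (auto simp: count_eq_zero_iff)
qed

lemma count_BU:
  assumes "0 < l"
  shows "count (BU l X) m = (if l dvd m then count X (m div l) else 0)"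
  unfolding BU_def using assms
  by (induction X) (auto simp: dvd_def intro: exI[of _ "m div l"])

lemma count_BU_ct:
  fixes \<sigma> :: "'b::finite \<Rightarrow> 'b"
  assumes inj: "inj \<sigma>" and l: "0 < l" and m: "0 < m"
  shows "m * count (BU l (cycle_type \<sigma>)) m = l * card {x. l * card (cyc \<sigma> x) = m}"
proof (cases "l dvd m")
  case True
  then obtain k where k: "m = l * k" by (auto simp: dvd_def)
  then have kpos: "0 < k" using m by simp
  have "m * count (BU l (cycle_type \<sigma>)) m = l * (k * count (cycle_type \<sigma>) k)"
    using k l True by (simp add: count_BU)
  also have "\<dots> = l * card {x. card (cyc \<sigma> x) = k}"
    using count_ct[OF inj kpos] by simp
  also have "{x. card (cyc \<sigma> x) = k} = {x. l * card (cyc \<sigma> x) = m}"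
    using k l by auto
  finally show ?thesis .
next
  case False
  then have "{x. l * card (cyc \<sigma> x) = m} = {}" by auto
  then show ?thesis using False l by (simp add: count_BU)
qed

lemma vm_inj:
  fixes A :: "'a::field^'n^'n"
  assumes "invertible A" "x v* A = y v* A"
  shows "x = y"
proof -
  obtain B where B: "A ** B = mat 1" using assms(1) unfolding invertible_def by blast
  have "x = (x v* A) v* B" by (simp add: vector_matrix_mul_assoc B)
  also have "\<dots> = (y v* A) v* B" using assms(2) by simp
  also have "\<dots> = y" by (simp add: vector_matrix_mul_assoc B)
  finally show ?thesis .
qed

lemma mat_chain_snoc:
  "mat_chain g M s (Suc n) = mat_chain g M s n ** M ((g ^^ n) s)"
proof (induction n arbitrary: s)
  case 0
  then show ?case by simp
next
  case (Suc n)
  have "mat_chain g M s (Suc (Suc n)) = M s ** mat_chain g M (g s) (Suc n)" by simp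
  also have "\<dots> = M s ** (mat_chain g M (g s) n ** M ((g ^^ n) (g s)))" using Suc by simp
  also have "\<dots> = mat_chain g M s (Suc n) ** M ((g ^^ Suc n) s)"
    by (simp add: matrix_mul_assoc funpow_swap1)
  finally show ?case .
qed

lemma mat_chain_inv:
  fixes M :: "'u \<Rightarrow> 'a::field^'d^'d"
  assumes "\<forall>u. invertible (M u)"
  shows "invertible (mat_chain g M s n)"
proof (induction n arbitrary: s)
  case 0
  then show ?case by (simp add: invertible_def)
next
  case (Suc n)
  then show ?case using assms by (simp add: invertible_mult)
qed

context
  fixes g :: "'u::finite \<Rightarrow> 'u" and S :: "'u set"
    and M :: "'u \<Rightarrow> 'a::{field,finite}^'d^'d" and w :: "'u \<Rightarrow> 'a^'d"
    and f :: "('a^'d) \<times> 'u \<Rightarrow> ('a^'d) \<times> 'u"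
  assumes injg: "inj g"
    and Suniq: "\<forall>u. \<exists>!s. s \<in> S \<and> u \<in> cyc g s"
    and Minv: "\<forall>u. invertible (M u)"
    and fdef: "\<forall>x u. f (x, u) = (x v* M u + (if g u \<in> S then w (g u) else 0), g u)"
begin

definition A :: "'u \<Rightarrow> 'a^'d \<Rightarrow> 'a^'d" where
  "A s = aff_map (mat_chain g M s (per g s)) (w s)"

lemma inj_f: "inj f"
proof (rule injI)
  fix z z' assume h: "f z = f z'"
  obtain x u x' u' where z: "z = (x, u)" "z' = (x', u')" by (cases z, cases z')
  from h have "g u = g u'" using fdef z by simp
  then have u: "u = u'" using injg by (simp add: inj_eq)
  from h have "x v* M u = x' v* M u" using fdef z u by simp
  then have "x = x'" using vm_inj Minv by blast
  then show "z = z'" using z u by simp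
qed

lemma snd_f_pow: "snd ((f ^^ n) z) = (g ^^ n) (snd z)"
proof (induction n)
  case 0 then show ?case by simp
next
  case (Suc n)
  obtain a b where ab: "(f ^^ n) z = (a, b)" by fastforce
  then show ?case using Suc fdef by simp
qed

lemma notS:
  assumes "s \<in> S" "0 < j" "j < per g s"
  shows "(g ^^ j) s \<notin> S"
proof
  assume h: "(g ^^ j) s \<in> S"
  have "(g ^^ j) s \<in> cyc g ((g ^^ j) s)" by (rule self_cyc[OF injg])
  moreover have "(g ^^ j) s \<in> cyc g s" unfolding cyc_def by simp
  ultimately have "(g ^^ j) s = s" using Suniq h assms(1) by blast
  then have "per g s \<le> j" using assms by (intro per_least[OF injg]) auto
  then show False using assms by simp
qed

lemma f_pow_S:
  assumes "s \<in> S" "n \<le> per g s"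
  shows "(f ^^ n) (x, s) = (x v* mat_chain g M s n + (if n = per g s then w s else 0), (g ^^ n) s)"
  using assms(2)
proof (induction n)
  case 0
  then show ?case using per_pos[OF injg, of s] by simp
next
  case (Suc n)
  then have IH: "(f ^^ n) (x, s) = (x v* mat_chain g M s n, (g ^^ n) s)" by simp
  have "(f ^^ Suc n) (x, s) = f (x v* mat_chain g M s n, (g ^^ n) s)" using IH by simp
  also have "\<dots> = (x v* mat_chain g M s (Suc n)
       + (if (g ^^ Suc n) s \<in> S then w ((g ^^ Suc n) s) else 0), (g ^^ Suc n) s)"
    using fdef by (simp del: mat_chain.simps add: mat_chain_snoc vector_matrix_mul_assoc)
  also have "\<dots> = (x v* mat_chain g M s (Suc n) + (if Suc n = per g s then w s else 0), (g ^^ Suc n) s)"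
  proof (cases "Suc n = per g s")
    case True
    then have "(g ^^ Suc n) s = s" using per_fix[OF injg] by metis
    then show ?thesis using True assms(1) by simp
  next
    case False
    then have "(g ^^ Suc n) s \<notin> S" using Suc.prems by (intro notS assms(1)) auto
    then show ?thesis using False by simp
  qed
  finally show ?case .
qed

lemma f_per:
  assumes "s \<in> S"
  shows "(f ^^ per g s) (x, s) = (A s x, s)"
  using f_pow_S[OF assms order_refl, of x] per_fix[OF injg, of s]
  by (simp add: A_def aff_map_def)

lemma f_per_mult:
  assumes "s \<in> S"
  shows "(f ^^ (per g s * q)) (x, s) = ((A s ^^ q) x, s)"
proof (induction q)
  case 0 then show ?case by simp
next
  case (Suc q)
  have "(f ^^ (per g s * Suc q)) (x, s) = (f ^^ per g s) ((f ^^ (per g s * q)) (x, s))"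
    by (simp add: funpow_add)
  also have "\<dots> = ((A s ^^ Suc q) x, s)" using Suc f_per[OF assms] by simp
  finally show ?case .
qed

lemma inj_A: "inj (A s)"
proof (rule injI)
  fix x y assume "A s x = A s y"
  then have "x v* mat_chain g M s (per g s) = y v* mat_chain g M s (per g s)"
    by (simp add: A_def aff_map_def)
  then show "x = y" using vm_inj mat_chain_inv[OF Minv] by blast
qed

lemma per_f:
  assumes "s \<in> S"
  shows "per f (x, s) = per g s * per (A s) x"
proof (rule per_unique[OF inj_f])
  fix n
  show "(f ^^ n) (x, s) = (x, s) \<longleftrightarrow> per g s * per (A s) x dvd n"
  proof
    assume h: "(f ^^ n) (x, s) = (x, s)"
    then have "(g ^^ n) s = s" using snd_f_pow[of n "(x, s)"] by simp
    then have "per g s dvd n" using fix_iff_dvd[OF injg] by blast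
    then obtain q where q: "n = per g s * q" by (auto simp: dvd_def)
    then have "(A s ^^ q) x = x" using h f_per_mult[OF assms] by simp
    then have "per (A s) x dvd q" using fix_iff_dvd[OF inj_A] by blast
    then show "per g s * per (A s) x dvd n" using q by simp
  next
    assume "per g s * per (A s) x dvd n"
    then obtain k where k: "n = per g s * (per (A s) x * k)" by (auto simp: dvd_def mult.assoc)
    have "(A s ^^ (per (A s) x * k)) x = x" using fix_iff_dvd[OF inj_A] by simp
    then show "(f ^^ n) (x, s) = (x, s)" using k f_per_mult[OF assms] by simp
  qed
qed

definition Phi :: "'u \<times> nat \<times> ('a^'d) \<Rightarrow> ('a^'d) \<times> 'u" where
  "Phi d = (f ^^ fst (snd d)) (snd (snd d), fst d)"

definition D :: "('u \<times> nat \<times> ('a^'d)) set" where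
  "D = Sigma S (\<lambda>s. {..<per g s} \<times> UNIV)"

lemma inj_Phi: "inj_on Phi D"
proof (rule inj_onI)
  fix d d' assume d: "d \<in> D" "d' \<in> D" and h: "Phi d = Phi d'"
  obtain s j x s' j' x' where dd: "d = (s, j, x)" "d' = (s', j', x')" by (cases d, cases d') auto
  have mem: "s \<in> S" "j < per g s" "s' \<in> S" "j' < per g s'" using d dd by (auto simp: D_def)
  have e1: "(g ^^ j) s = (g ^^ j') s'"
    using h snd_f_pow[of j "(x, s)"] snd_f_pow[of j' "(x', s')"] dd by (simp add: Phi_def)
  have "(g ^^ j) s \<in> cyc g s" by (simp add: cyc_def)
  moreover have "(g ^^ j) s \<in> cyc g s'" unfolding e1 cyc_def by simp
  ultimately have ss: "s = s'" using Suniq mem by blast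
  then have jj: "j = j'" using inj_on_pow[OF injg, of s] e1 mem by (auto dest: inj_onD)
  have "(f ^^ j) (x, s) = (f ^^ j) (x', s)" using h dd ss jj by (simp add: Phi_def)
  then have "x = x'" using inj_fn[OF inj_f, of j] by (auto dest: injD)
  then show "d = d'" using dd ss jj by simp
qed

lemma surj_Phi: "Phi ` D = UNIV"
proof -
  have "z \<in> Phi ` D" for z
  proof -
    obtain x u where z: "z = (x, u)" by fastforce
    obtain s where s: "s \<in> S" "u \<in> cyc g s" using Suniq by blast
    then obtain j where j: "j < per g s" "u = (g ^^ j) s" using cyc_eq[OF injg, of s] by auto
    have "surj (f ^^ j)" by (intro finite_UNIV_inj_surj inj_fn inj_f) simp
    then obtain z' where z': "(f ^^ j) z' = z" by (metis surjD)
    have "(g ^^ j) (snd z') = (g ^^ j) s" using snd_f_pow[of j z'] z' z j by simp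
    then have "snd z' = s" using inj_fn[OF injg, of j] by (auto dest: injD)
    then have "Phi (s, j, fst z') = z" using z' by (metis Phi_def fst_conv prod.collapse snd_conv)
    moreover have "(s, j, fst z') \<in> D" using s j by (simp add: D_def)
    ultimately show ?thesis by blast
  qed
  then show ?thesis by blast
qed

lemma card_f_level:
  "card {z. card (cyc f z) = m} = (\<Sum>s\<in>S. per g s * card {x. per g s * card (cyc (A s) x) = m})"
proof -
  let ?P = "\<lambda>z. card (cyc f z) = m"
  have "{z. ?P z} = Phi ` {d\<in>D. ?P (Phi d)}"
  proof
    show "{z. ?P z} \<subseteq> Phi ` {d\<in>D. ?P (Phi d)}"
    proof
      fix z assume z: "z \<in> {z. ?P z}"
      have "z \<in> Phi ` D" using surj_Phi by simp
      then obtain d where "d \<in> D" "z = Phi d" by (rule imageE)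
      then show "z \<in> Phi ` {d\<in>D. ?P (Phi d)}" using z by simp
    qed
  qed auto
  moreover have "inj_on Phi {d\<in>D. ?P (Phi d)}"
    by (rule inj_on_subset[OF inj_Phi]) simp
  ultimately have "card {z. ?P z} = card {d\<in>D. ?P (Phi d)}"
    by (simp add: card_image)
  also have "{d\<in>D. ?P (Phi d)} = Sigma S (\<lambda>s. {..<per g s} \<times> {x. per g s * card (cyc (A s) x) = m})"
  proof -
    have "?P (Phi (s, j, x)) \<longleftrightarrow> per g s * card (cyc (A s) x) = m" if "s \<in> S" for s j x
      using that cyc_pow[OF inj_f, of j "(x, s)"] card_cyc[OF inj_f] card_cyc[OF inj_A] per_f
      by (simp add: Phi_def)
    then show ?thesis unfolding D_def by auto
  qed
  also have "card \<dots> = (\<Sum>s\<in>S. per g s * card {x. per g s * card (cyc (A s) x) = m})"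
    by (simp add: card_cartesian_product)
  finally show ?thesis .
qed


lemma ct_main:
  "cycle_type f = (\<Sum>s\<in>S. BU (card (cyc g s))
      (cycle_type (aff_map (mat_chain g M s (card (cyc g s))) (w s))))"
proof -
  have "(\<Sum>s\<in>S. BU (card (cyc g s)) (cycle_type (aff_map (mat_chain g M s (card (cyc g s))) (w s))))
      = (\<Sum>s\<in>S. BU (per g s) (cycle_type (A s)))"
    by (simp add: card_cyc[OF injg] A_def)
  moreover have "cycle_type f = (\<Sum>s\<in>S. BU (per g s) (cycle_type (A s)))"
  proof (rule multiset_eqI)
    fix m
    show "count (cycle_type f) m = count (\<Sum>s\<in>S. BU (per g s) (cycle_type (A s))) m"
    proof (cases "m = 0")
      case True
      then show ?thesis by (simp add: count_sum count_BU per_pos[OF injg] count_ct0)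
    next
      case False
      then have m: "0 < m" by simp
      have "m * count (cycle_type f) m = card {z. card (cyc f z) = m}"
        by (rule count_ct[OF inj_f m])
      also have "\<dots> = (\<Sum>s\<in>S. per g s * card {x. per g s * card (cyc (A s) x) = m})"
        by (rule card_f_level)
      also have "\<dots> = (\<Sum>s\<in>S. m * count (BU (per g s) (cycle_type (A s))) m)"
        using count_BU_ct[OF inj_A per_pos[OF injg] m] by simp
      also have "\<dots> = m * count (\<Sum>s\<in>S. BU (per g s) (cycle_type (A s))) m"
        by (simp add: count_sum sum_distrib_left)
      finally show ?thesis using m by simp
    qed
  qed
  ultimately show ?thesis by simp
qed

end


theorem theorem4p5:
  fixes p :: nat
    and g :: "'a::{field,finite}^'t \<Rightarrow> 'a^'t"
    and S :: "('a^'t) set"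
    and M :: "'a^'t \<Rightarrow> 'a^'d^'d"
    and w :: "'a^'t \<Rightarrow> 'a^'d"
    and f :: "('a^'d) \<times> ('a^'t) \<Rightarrow> ('a^'d) \<times> ('a^'t)"
  assumes "prime p" and "CARD('a) = p"
    and "complete_mapping g"
    and "\<forall>u. \<exists>!s. s \<in> S \<and> u \<in> cyc g s"
    and "\<forall>u. M u \<in> CGL"
    and "\<forall>x u. f (x, u) =
           (let \<omega> = (if g u \<in> S then w (g u) else 0);
                \<nu> = g u - u
            in (x v* M u + \<omega>, u + \<nu>))"
  shows "complete_mapping f \<and>
         cycle_type f =
           (\<Sum>s\<in>S. BU (card (cyc g s))
                      (cycle_type (aff_map (mat_chain g M s (card (cyc g s))) (w s))))"
proof -
  have bijg: "bij g" and bijg2: "bij (\<lambda>u. g u + u)"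
    using assms(3) unfolding complete_mapping_def by auto
  have injg: "inj g" using bijg bij_is_inj by blast
  have Minv: "\<forall>u. invertible (M u)" using assms(5) unfolding CGL_def by blast
  have fdef: "\<forall>x u. f (x, u) = (x v* M u + (if g u \<in> S then w (g u) else 0), g u)"
    using assms(6) by (simp add: Let_def)
  have injf: "inj f" by (rule inj_f[OF injg assms(4) Minv fdef])
  have bijf: "bij f" using injf by (simp add: bij_def finite_UNIV_inj_surj)
  have injf2: "inj (\<lambda>z. f z + z)"
  proof (rule injI)
    fix z z' assume h: "f z + z = f z' + z'"
    obtain x u x' u' where z: "z = (x, u)" "z' = (x', u')" by (cases z, cases z')
    let ?o = "\<lambda>u. (if g u \<in> S then w (g u) else 0)"
    have h2: "(x v* M u + ?o u + x, g u + u) = (x' v* M u' + ?o u' + x', g u' + u')"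
      using h fdef z by simp
    then have "g u + u = g u' + u'" by simp
    then have u: "u = u'" using bijg2 bij_is_inj by (metis (mono_tags, lifting) injD)
    then have "x v* M u + ?o u + x = x' v* M u + ?o u + x'" using h2 by simp
    then have "(x v* M u + x) + ?o u = (x' v* M u + x') + ?o u" by (simp add: ac_simps)
    then have "x v* M u + x = x' v* M u + x'" by (rule add_right_imp_eq)
    then have "(x - x') v* M u = - (x - x')"
      by (simp add: vector_matrix_mult_diff_distrib algebra_simps)
    then have "x - x' = 0" using assms(5) unfolding CGL_def by blast
    then show "z = z'" using z u by simp
  qed
  have bijf2: "bij (\<lambda>z. f z + z)" using injf2 by (simp add: bij_def finite_UNIV_inj_surj)
  have "complete_mapping f" unfolding complete_mapping_def using bijf bijf2 by simp
  moreover have "cycle_type f =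
           (\<Sum>s\<in>S. BU (card (cyc g s))
                      (cycle_type (aff_map (mat_chain g M s (card (cyc g s))) (w s))))"
    by (rule ct_main[OF injg assms(4) Minv fdef])
  ultimately show ?thesis by simp
qed

end
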